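(* Fix a vertex $\mu$. Let $fE=\widehat f\widehat E\neq0$ and $G$ be antinef divisors. Then for every vertex $\nu$, $$\lambda(G,\widehat f_{\langle\widehat f\rangle}\widehat E;\nu)\ge\lambda(G,fE;\nu),$$ with equality if and only if either $d(\mu,\nu)\le1$, or $\widehat f_j=0$ for every $j\in\Gamma^i_\nu$, where $i$ is the vertex of the path $[\mu,\nu]$ adjacent to $\mu$.
   Context: Setting: $R$ two-dimensional regular local ring with algebraically closed residue field; $\pi:X=X_{N+1}\to\cdots\to X_1=\operatorname{Spec}R$ a composition of point blowups; $E_\nu$ strict and $E^*_\nu$ total transforms of exceptional divisors; proximity matrix $P$ ($p_{\mu,\mu}=1$, $p_{\mu,\nu}=-1$ if $x_\mu$ lies on the strict transform on $X_\mu$ of the exceptional divisor of the blowup of $x_\nu$, else $0$), $Q=(q_{\mu,\nu})=P^{-1}$, $V=(P^TP)^{-1}$. Basis $\widehat E_\nu$ with $E_\mu\cdot\widehat E_\nu=-\delta_{\mu,\nu}$; $\widehat f\widehat E=\sum\widehat f_\nu\widehat E_\nu=\sum f_\nu E_\nu=fE$ with $f=\widehat fV$; antinef means $\widehat f\ge0$. $K=\sum E^*_\nu=\sum k_\nu E_\nu$. Dual graph $\Gamma$ on $1..N$, $\gamma\sim\eta$ iff $\gamma\ne\eta$ and $E_\gamma\cap E_\eta\neq\emptyset$; $d(\mu,\nu)$ the graph distance; $[\mu,\nu]$ the path; branch $\Gamma^\mu_\nu$ = maximal connected subgraph containing $\nu$ but not $\mu$ ($\Gamma^\mu_\mu=\emptyset$).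 $\lambda(F,G;\nu)=(f_\nu+k_\nu+1)/g_\nu$. Modification: $\mathbf 1_i$ standard basis vector of $\mathbb Q^\Gamma$; $\rho_{[\alpha,\beta]}(\nu)=V_{\beta,\nu}/V_{\alpha,\nu}$; $\widehat r_{[\alpha,\beta]}=\mathbf 1_\beta-\rho_{[\alpha,\beta]}(\alpha)\mathbf 1_\alpha$; $\widehat f_{\langle\widehat g\rangle}=\widehat f-\sum_{i\sim\mu}\sum_{j\in\Gamma^\mu_i}\widehat g_j\widehat r_{[i,j]}$. *)

theory Defs
  imports Complex_Main
begin

text \<open>Combinatorial encoding of a composition of N point blowups.
  Vertices (exceptional divisors) are 1..N.  The configuration c assigns to each
  mu in 2..N the set c mu of indices nu < mu such that the centre x_mu lies on the
  strict transform of E_nu on X_mu (i.e. the points to which x_mu is proximate).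
  The first centre is the closed point of Spec R, so c 1 = {}.\<close>

type_synonym config = "nat \<Rightarrow> nat set"

text \<open>dgraph c m = set of edges of the dual graph of the exceptional divisors on X_(m+1).\<close>
fun dgraph :: "config \<Rightarrow> nat \<Rightarrow> nat set set" where
  "dgraph c 0 = {}"
| "dgraph c (Suc m) =
     (if card (c (Suc m)) = 2 then dgraph c m - {c (Suc m)} else dgraph c m)
     \<union> (\<lambda>v. {Suc m, v}) ` c (Suc m)"

definition valid_blowups :: "nat \<Rightarrow> config \<Rightarrow> bool" where
  "valid_blowups N c \<longleftrightarrow> N \<ge> 1 \<and> c 1 = {} \<and>
     (\<forall>m\<in>{2..N}. c m \<subseteq> {1..<m} \<and>
        (card (c m) = 1 \<or> (card (c m) = 2 \<and> c m \<in> dgraph c (m - 1))))"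

definition prox :: "config \<Rightarrow> nat \<Rightarrow> nat \<Rightarrow> real" where
  "prox c m n = (if m = n then 1 else if n \<in> c m then -1 else 0)"

definition mat_inv :: "nat \<Rightarrow> (nat \<Rightarrow> nat \<Rightarrow> real) \<Rightarrow> (nat \<Rightarrow> nat \<Rightarrow> real)" where
  "mat_inv N A = (SOME B. \<forall>i\<in>{1..N}. \<forall>j\<in>{1..N}.
       (\<Sum>k=1..N. B i k * A k j) = (if i = j then 1 else 0))"

definition PtP :: "nat \<Rightarrow> config \<Rightarrow> nat \<Rightarrow> nat \<Rightarrow> real" where
  "PtP N c i j = (\<Sum>k=1..N. prox c k i * prox c k j)"

definition Qmat :: "nat \<Rightarrow> config \<Rightarrow> nat \<Rightarrow> nat \<Rightarrow> real" where
  "Qmat N c = mat_inv N (prox c)"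

definition Vmat :: "nat \<Rightarrow> config \<Rightarrow> nat \<Rightarrow> nat \<Rightarrow> real" where
  "Vmat N c = mat_inv N (PtP N c)"

text \<open>Coefficients k_nu of K = sum of total transforms E*_nu = sum k_nu E_nu.\<close>
definition kcoef :: "nat \<Rightarrow> config \<Rightarrow> nat \<Rightarrow> real" where
  "kcoef N c n = (\<Sum>k=1..N. Qmat N c n k)"

text \<open>hat coefficients: fhat = f P^T P (so that f = fhat V).\<close>
definition hatc :: "nat \<Rightarrow> config \<Rightarrow> (nat \<Rightarrow> real) \<Rightarrow> nat \<Rightarrow> real" where
  "hatc N c f n = (\<Sum>l=1..N. f l * PtP N c l n)"

definition ecoef :: "nat \<Rightarrow> config \<Rightarrow> (nat \<Rightarrow> real) \<Rightarrow> nat \<Rightarrow> real" where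
  "ecoef N c h n = (\<Sum>t=1..N. h t * Vmat N c t n)"

definition antinef :: "nat \<Rightarrow> config \<Rightarrow> (nat \<Rightarrow> real) \<Rightarrow> bool" where
  "antinef N c f \<longleftrightarrow> (\<forall>n\<in>{1..N}. hatc N c f n \<ge> 0)"

definition adj :: "nat \<Rightarrow> config \<Rightarrow> nat \<Rightarrow> nat \<Rightarrow> bool" where
  "adj N c a b \<longleftrightarrow> a \<noteq> b \<and> {a, b} \<in> dgraph c N"

definition gdist :: "nat \<Rightarrow> config \<Rightarrow> nat \<Rightarrow> nat \<Rightarrow> nat" where
  "gdist N c a b = (LEAST n. (adj N c ^^ n) a b)"

text \<open>Branch Gamma^mu_nu: maximal connected subgraph containing nu but not mu (empty if nu = mu).\<close>
definition branch :: "nat \<Rightarrow> config \<Rightarrow> nat \<Rightarrow> nat \<Rightarrow> nat set" where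
  "branch N c m n = {j \<in> {1..N}. n \<in> {1..N} \<and> n \<noteq> m \<and>
      (\<lambda>x y. adj N c x y \<and> x \<noteq> m \<and> y \<noteq> m)\<^sup>*\<^sup>* n j}"

definition rho :: "nat \<Rightarrow> config \<Rightarrow> nat \<Rightarrow> nat \<Rightarrow> nat \<Rightarrow> real" where
  "rho N c a b n = Vmat N c b n / Vmat N c a n"

definition rhat :: "nat \<Rightarrow> config \<Rightarrow> nat \<Rightarrow> nat \<Rightarrow> nat \<Rightarrow> real" where
  "rhat N c a b t = (if t = b then 1 else 0) - rho N c a b a * (if t = a then 1 else 0)"

definition modif :: "nat \<Rightarrow> config \<Rightarrow> nat \<Rightarrow> (nat \<Rightarrow> real) \<Rightarrow> (nat \<Rightarrow> real) \<Rightarrow> nat \<Rightarrow> real" where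
  "modif N c m fh gh t = fh t -
     (\<Sum>i\<in>{i\<in>{1..N}. adj N c i m}. \<Sum>j\<in>branch N c m i. gh j * rhat N c i j t)"

definition lam :: "nat \<Rightarrow> config \<Rightarrow> (nat \<Rightarrow> real) \<Rightarrow> (nat \<Rightarrow> real) \<Rightarrow> nat \<Rightarrow> real" where
  "lam N c f g n = (f n + kcoef N c n + 1) / g n"

end

theory Submission
  imports Defs "Jordan_Normal_Form.Determinant"
begin


lemma sum_shift1: "(\<Sum>k=1..N. f k) = (\<Sum>k<N. f (Suc k))"
  by (induction N) auto

lemma delta_mult[simp]: "(if P then 1 else (0::real)) * x = (if P then x else 0)" by simp
lemma mult_delta[simp]: "x * (if P then 1 else (0::real)) = (if P then x else 0)" by simp

lemma right_inv_left:
  fixes A B :: "nat \<Rightarrow> nat \<Rightarrow> real"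
  assumes AB: "\<And>i j. i\<in>{1..N} \<Longrightarrow> j\<in>{1..N} \<Longrightarrow> (\<Sum>k=1..N. A i k * B k j) = (if i=j then 1 else 0)"
  shows "\<And>i j. i\<in>{1..N} \<Longrightarrow> j\<in>{1..N} \<Longrightarrow> (\<Sum>k=1..N. B i k * A k j) = (if i=j then 1 else 0)"
proof -
  fix i j assume ij: "i\<in>{1..N}" "j\<in>{1..N}"
  define A' where "A' = mat N N (\<lambda>(i,j). A (Suc i) (Suc j))"
  define B' where "B' = mat N N (\<lambda>(i,j). B (Suc i) (Suc j))"
  have cA: "A' \<in> carrier_mat N N" and cB: "B' \<in> carrier_mat N N" by (auto simp: A'_def B'_def)
  have "A' * B' = 1\<^sub>m N"
  proof (rule eq_matI)
    fix a b assume ab: "a < dim_row (1\<^sub>m N)" "b < dim_col (1\<^sub>m N)"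
    have "(A' * B') $$ (a,b) = (\<Sum>k<N. A (Suc a) (Suc k) * B (Suc k) (Suc b))"
      using ab by (simp add: A'_def B'_def scalar_prod_def atLeast0LessThan)
    also have "\<dots> = (\<Sum>k=1..N. A (Suc a) k * B k (Suc b))" by (rule sum_shift1[symmetric])
    also have "\<dots> = 1\<^sub>m N $$ (a,b)" using ab AB[of "Suc a" "Suc b"] by simp
    finally show "(A' * B') $$ (a,b) = 1\<^sub>m N $$ (a,b)" .
  qed (auto simp: A'_def B'_def)
  hence BA: "B' * A' = 1\<^sub>m N" using mat_mult_left_right_inverse[OF cA cB] by blast
  obtain a b where a: "i = Suc a" "a < N" and b: "j = Suc b" "b < N" using ij
  proof -
    have "i - 1 < N" "j - 1 < N" "i = Suc (i - 1)" "j = Suc (j - 1)" using ij by auto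
    thus ?thesis using that by blast
  qed
  have "(\<Sum>k=1..N. B i k * A k j) = (\<Sum>k<N. B (Suc a) (Suc k) * A (Suc k) (Suc b))"
    unfolding a b by (rule sum_shift1)
  also have "\<dots> = (B' * A') $$ (a,b)"
    using a b by (simp add: A'_def B'_def scalar_prod_def atLeast0LessThan)
  also have "\<dots> = (if i=j then 1 else 0)" using BA a b by simp
  finally show "(\<Sum>k=1..N. B i k * A k j) = (if i=j then 1 else 0)" .
qed

lemma mat_inv_eq:
  fixes A B :: "nat \<Rightarrow> nat \<Rightarrow> real"
  assumes AB: "\<And>i j. i\<in>{1..N} \<Longrightarrow> j\<in>{1..N} \<Longrightarrow> (\<Sum>k=1..N. A i k * B k j) = (if i=j then 1 else 0)"
    and ij: "i\<in>{1..N}" "j\<in>{1..N}"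
  shows "mat_inv N A i j = B i j"
proof -
  let ?P = "\<lambda>B'. \<forall>i\<in>{1..N}. \<forall>j\<in>{1..N}. (\<Sum>k=1..N. B' i k * A k j) = (if i = j then 1 else 0)"
  have "?P B" using right_inv_left[OF AB] by blast
  hence P: "?P (mat_inv N A)" unfolding mat_inv_def by (rule someI[where P = ?P])
  define C where "C = mat_inv N A"
  have "C i j = (\<Sum>l=1..N. C i l * (if l = j then 1 else 0))"
    using ij by (simp add: sum.delta)
  also have "\<dots> = (\<Sum>l=1..N. C i l * (\<Sum>k=1..N. A l k * B k j))"
  proof (rule sum.cong[OF refl])
    fix l assume l: "l \<in> {1..N}"
    show "C i l * (if l = j then 1 else 0) = C i l * (\<Sum>k=1..N. A l k * B k j)" using AB[OF l ij(2)] by simp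
  qed
  also have "\<dots> = (\<Sum>k=1..N. (\<Sum>l=1..N. C i l * A l k) * B k j)"
    unfolding sum_distrib_left sum_distrib_right mult.assoc by (rule sum.swap)
  also have "\<dots> = (\<Sum>k=1..N. (if i = k then 1 else 0) * B k j)"
    by (rule sum.cong) (use P ij in \<open>auto simp: C_def\<close>)
  also have "\<dots> = B i j" using ij by (simp add: sum.delta)
  finally show ?thesis by (simp add: C_def)
qed

lemma rtranclp_lift:
  assumes "\<And>a b. R a b \<Longrightarrow> S\<^sup>*\<^sup>* a b" and "R\<^sup>*\<^sup>* x y"
  shows "S\<^sup>*\<^sup>* x y"
  using assms(2) by (induction rule: rtranclp_induct) (auto dest: assms(1) intro: rtranclp_trans)

lemma card2_eq: "card C = 2 \<Longrightarrow> a \<in> C \<Longrightarrow> b \<in> C \<Longrightarrow> a \<noteq> b \<Longrightarrow> C = {a, b}"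
  by (metis card_2_iff doubleton_eq_iff insertE singletonD)

definition cutp :: "nat set set \<Rightarrow> nat \<Rightarrow> nat \<Rightarrow> nat set \<Rightarrow> bool" where
  "cutp G x y S \<longleftrightarrow> x \<in> S \<and> y \<notin> S \<and> (\<forall>u w. {u,w} \<in> G \<longrightarrow> u \<in> S \<longrightarrow> w \<notin> S \<longrightarrow> {u,w} = {x,y})"

lemma cutp_flip: "cutp G x y S \<Longrightarrow> cutp G y x (- S)"
  unfolding cutp_def by (metis ComplD ComplI insert_commute)

function Qr :: "config \<Rightarrow> nat \<Rightarrow> nat \<Rightarrow> real" where
  "Qr c a t = (if a = t then 1 else 0) + (\<Sum>b\<in>{b\<in>c a. b < a}. Qr c b t)"
  by auto
termination by (relation "measure (\<lambda>(c,a,t). a)") auto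

declare Qr.simps[simp del]

lemma Qr_nonneg: "Qr c a t \<ge> 0"
  by (induction c a t rule: Qr.induct) (subst Qr.simps, auto intro!: add_nonneg_nonneg sum_nonneg)

lemma Qr_diag: "Qr c a a \<ge> 1"
  by (subst Qr.simps) (auto intro: sum_nonneg Qr_nonneg)

lemma walk_split:
  "(R ^^ k) x y \<Longrightarrow> x \<noteq> p \<Longrightarrow> (\<lambda>a b. R a b \<and> a \<noteq> p \<and> b \<noteq> p)\<^sup>*\<^sup>* x y \<or> (\<exists>k'<k. (R ^^ k') p y)"
proof (induction k arbitrary: x)
  case 0 thus ?case by simp
next
  case (Suc k)
  obtain z where z: "R x z" "(R ^^ k) z y" using relpowp_Suc_D2[OF Suc.prems(1)] by blast
  show ?case
  proof (cases "z = p")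
    case True thus ?thesis using z by blast
  next
    case False
    from Suc.IH[OF z(2) False] show ?thesis
    proof
      assume "(\<lambda>a b. R a b \<and> a \<noteq> p \<and> b \<noteq> p)\<^sup>*\<^sup>* z y"
      thus ?thesis using z(1) False Suc.prems(2) by (auto intro: converse_rtranclp_into_rtranclp)
    next
      assume "\<exists>k'<k. (R ^^ k') p y" thus ?thesis using less_SucI by blast
    qed
  qed
qed

lemma restrict_walk:
  assumes "R\<^sup>*\<^sup>* a b" "P a" "\<And>u w. R u w \<Longrightarrow> P u \<Longrightarrow> P w"
  shows "(\<lambda>u w. R u w \<and> P u \<and> P w)\<^sup>*\<^sup>* a b"
proof -
  have "P b \<and> (\<lambda>u w. R u w \<and> P u \<and> P w)\<^sup>*\<^sup>* a b" using assms(1)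
  proof (induction rule: rtranclp_induct)
    case base thus ?case using assms(2) by simp
  next
    case (step z b)
    hence "P b" using assms(3) by blast
    thus ?case using step by (auto intro: rtranclp.rtrancl_into_rtrancl)
  qed
  thus ?thesis by simp
qed

lemma rtranclp_mono_rel:
  assumes "R\<^sup>*\<^sup>* a b" "\<And>u w. R u w \<Longrightarrow> S u w" shows "S\<^sup>*\<^sup>* a b"
  using assms(1) by (induction rule: rtranclp_induct) (auto intro: rtranclp.rtrancl_into_rtrancl assms(2))

context
  fixes N :: nat and c :: config
  assumes VB: "valid_blowups N c"
begin

lemma c1: "c 1 = {}" using VB by (simp add: valid_blowups_def)

lemma cS: "m \<in> {1..N} \<Longrightarrow> c m \<subseteq> {1..<m}"
proof -
  assume m: "m \<in> {1..N}"
  show ?thesis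
  proof (cases "m = 1")
    case True thus ?thesis using c1 by simp
  next
    case False hence "m \<in> {2..N}" using m by auto
    thus ?thesis using VB by (auto simp: valid_blowups_def)
  qed
qed

lemma cC: "m \<in> {2..N} \<Longrightarrow> card (c m) = 1 \<or> (card (c m) = 2 \<and> c m \<in> dgraph c (m - 1))"
  using VB by (auto simp: valid_blowups_def)

lemma dgraph_edges: "m \<le> N \<Longrightarrow> e \<in> dgraph c m \<Longrightarrow> \<exists>x y. e = {x,y} \<and> x \<noteq> y \<and> x \<in> {1..m} \<and> y \<in> {1..m}"
proof (induction m arbitrary: e)
  case 0 thus ?case by simp
next
  case (Suc m)
  have cs: "c (Suc m) \<subseteq> {1..<Suc m}" using cS[of "Suc m"] Suc.prems by auto
  from Suc.prems(2) consider "e \<in> dgraph c m" | w where "w \<in> c (Suc m)" "e = {Suc m, w}"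
    by (auto split: if_splits)
  thus ?case
  proof cases
    case 1 thus ?thesis using Suc.IH[of e] Suc.prems by fastforce
  next
    case 2 thus ?thesis using cs by (intro exI[of _ "Suc m"] exI[of _ w]) auto
  qed
qed

lemma old_vertex: "m \<le> N \<Longrightarrow> {a, b} \<in> dgraph c m \<Longrightarrow> a \<in> {1..m} \<and> b \<in> {1..m} \<and> a \<noteq> b"
  using dgraph_edges[of m "{a,b}"] by (auto simp: doubleton_eq_iff)

lemma PtP_inv: "m \<le> N \<Longrightarrow> a \<noteq> b \<Longrightarrow>
  (\<Sum>k=1..m. prox c k a * prox c k b) = (if {a,b} \<in> dgraph c m then -1 else 0)"
proof (induction m arbitrary: a b)
  case 0 thus ?case by simp
next
  case (Suc m)
  define v where "v = Suc m"
  define C where "C = c v"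
  define G where "G = dgraph c m"
  have G': "dgraph c (Suc m) = (if card C = 2 then G - {C} else G) \<union> (\<lambda>w. {v, w}) ` C"
    by (simp add: v_def C_def G_def)
  have cs: "C \<subseteq> {1..<v}" using cS[of v] Suc.prems by (auto simp: v_def C_def)
  have oldv: "\<And>p q. {p,q} \<in> G \<Longrightarrow> p \<noteq> v \<and> q \<noteq> v"
    using old_vertex[of m] Suc.prems unfolding G_def v_def by (metis Suc_leD atLeastAtMost_iff not_less_eq_eq order_refl)
  have IH: "(\<Sum>k=1..m. prox c k a * prox c k b) = (if {a,b} \<in> G then -1 else 0)"
    using Suc by (simp add: G_def)
  have split: "(\<Sum>k=1..Suc m. prox c k a * prox c k b) = (\<Sum>k=1..m. prox c k a * prox c k b) + prox c v a * prox c v b"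
    by (simp add: v_def)
  have pv: "\<And>x. prox c v x = (if v = x then 1 else if x \<in> C then -1 else 0)" by (simp add: prox_def C_def)
  show ?case
  proof (cases "m = 0")
    case True
    hence "C = {}" using c1 by (simp add: C_def v_def)
    have c1': "c (Suc 0) = {}" using c1 by simp
    show ?thesis using True Suc.prems \<open>C = {}\<close> by (auto simp add: prox_def c1')
  next
    case False
    hence v2: "v \<in> {2..N}" using Suc.prems by (auto simp: v_def)
    have cc: "card C = 1 \<or> (card C = 2 \<and> C \<in> G)" using cC[OF v2] by (simp add: C_def G_def v_def)
    have img: "\<And>p q. {p,q} \<in> (\<lambda>w. {v, w}) ` C \<longleftrightarrow> (p = v \<and> q \<in> C) \<or> (q = v \<and> p \<in> C)"
      using cs by (auto simp: doubleton_eq_iff)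
    show ?thesis
    proof (cases "a = v \<or> b = v")
      case True
      have nG: "{a,b} \<notin> G" using oldv[of a b] True by auto
      have t: "prox c v a * prox c v b = (if {a,b} \<in> (\<lambda>w. {v, w}) ` C then -1 else 0)"
        using True Suc.prems(2) unfolding img pv by auto
      have "{a,b} \<in> dgraph c (Suc m) \<longleftrightarrow> {a,b} \<in> (\<lambda>w. {v, w}) ` C"
        unfolding G' using nG by auto
      thus ?thesis unfolding split IH t using nG by simp
    next
      case False
      have newm: "{a,b} \<in> dgraph c (Suc m) \<longleftrightarrow> {a,b} \<in> (if card C = 2 then G - {C} else G)"
        unfolding G' using img False by auto
      show ?thesis
      proof (cases "a \<in> C \<and> b \<in> C")
        case True
        hence c2: "card C = 2" "C \<in> G" using cc Suc.prems(2) by (auto simp: card_1_singleton_iff)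
        have "C = {a,b}" using card2_eq[OF c2(1)] True Suc.prems(2) by simp
        thus ?thesis unfolding split newm using IH c2 True False
          by (simp add: pv)
      next
        case nC: False
        hence "\<not> (card C = 2 \<and> {a,b} = C)" by auto
        hence "{a,b} \<in> dgraph c (Suc m) \<longleftrightarrow> {a,b} \<in> G" using newm by auto
        thus ?thesis unfolding split using IH nC False
          by (auto simp: pv)
      qed
    qed
  qed
qed


declare dgraph.simps(2)[simp del]

lemma step_facts:
  assumes m: "Suc m \<le> N" "m \<noteq> 0"
  defines "v \<equiv> Suc m" and "C \<equiv> c (Suc m)" and "G \<equiv> dgraph c m"
  shows "dgraph c (Suc m) = (if card C = 2 then G - {C} else G) \<union> (\<lambda>w. {v, w}) ` C"
    and "C \<subseteq> {1..<v}"
    and "\<And>p q. {p,q} \<in> G \<Longrightarrow> p \<noteq> v \<and> q \<noteq> v \<and> p \<in> {1..m} \<and> q \<in> {1..m}"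
    and "card C = 1 \<or> (card C = 2 \<and> C \<in> G)"
    and "\<And>p q. {p,q} \<in> (\<lambda>w. {v, w}) ` C \<longleftrightarrow> (p = v \<and> q \<in> C) \<or> (q = v \<and> p \<in> C)"
proof -
  show "dgraph c (Suc m) = (if card C = 2 then G - {C} else G) \<union> (\<lambda>w. {v, w}) ` C"
    by (simp add: v_def C_def G_def dgraph.simps)
  show cs: "C \<subseteq> {1..<v}" using cS[of v] m by (auto simp: v_def C_def)
  show "\<And>p q. {p,q} \<in> G \<Longrightarrow> p \<noteq> v \<and> q \<noteq> v \<and> p \<in> {1..m} \<and> q \<in> {1..m}"
  proof -
    fix p q assume "{p,q} \<in> G"
    hence "p \<in> {1..m} \<and> q \<in> {1..m}" using old_vertex[of m p q] m by (simp add: G_def)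
    thus "p \<noteq> v \<and> q \<noteq> v \<and> p \<in> {1..m} \<and> q \<in> {1..m}" by (auto simp: v_def)
  qed
  have v2: "Suc m \<in> {2..N}" using m by auto
  show "card C = 1 \<or> (card C = 2 \<and> C \<in> G)" using cC[OF v2] by (simp add: C_def G_def)
  show "\<And>p q. {p,q} \<in> (\<lambda>w. {v, w}) ` C \<longleftrightarrow> (p = v \<and> q \<in> C) \<or> (q = v \<and> p \<in> C)"
    using cs by (auto simp: doubleton_eq_iff)
qed

lemma dgraph1: "dgraph c (Suc 0) = {}"
  using c1 by (simp add: dgraph.simps)

lemma dgraph_cut: "m \<le> N \<Longrightarrow> {x,y} \<in> dgraph c m \<Longrightarrow> x \<noteq> y \<Longrightarrow> \<exists>S. cutp (dgraph c m) x y S"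
proof (induction m arbitrary: x y)
  case 0 thus ?case by simp
next
  case (Suc m)
  show ?case
  proof (cases "m = 0")
    case True thus ?thesis using Suc.prems dgraph1 by simp
  next
    case False
    define v where "v = Suc m"
    define C where "C = c (Suc m)"
    define G where "G = dgraph c m"
    note sf = step_facts[OF Suc.prems(1) False, folded v_def C_def G_def]
    have sf1: "dgraph c (Suc m) = (if card C = 2 then G - {C} else G) \<union> (\<lambda>w. {v, w}) ` C"
      using sf(1) unfolding v_def .
    have mN: "m \<le> N" using Suc.prems by simp
    have key: "\<exists>S. cutp (dgraph c (Suc m)) w v S" if wC: "w \<in> C" for w
    proof -
      have wv: "w \<noteq> v" using sf(2) wC by auto
      from sf(4) show ?thesis
      proof
        assume "card C = 1"
        hence Cw: "C = {w}" using wC by (auto simp: card_1_singleton_iff)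
        show ?thesis
        proof (rule exI[of _ "- {v}"], unfold cutp_def, intro conjI allI impI)
          show "w \<in> - {v}" using wv by simp
          show "v \<notin> - {v}" by simp
          fix u w' assume e: "{u, w'} \<in> dgraph c (Suc m)" and u: "u \<in> - {v}" and w': "w' \<notin> - {v}"
          hence w'v: "w' = v" by simp
          have "{u,w'} \<notin> G" using sf(3)[of u w'] w'v by auto
          hence "{u,w'} \<in> (\<lambda>w. {v, w}) ` C" using e[unfolded sf1] by (auto split: if_splits)
          hence "u \<in> C" using sf(5) u w'v by auto
          thus "{u, w'} = {w, v}" using Cw w'v by auto
        qed
      next
        assume c2: "card C = 2 \<and> C \<in> G"
        obtain p q where pq: "C = {p,q}" "p \<noteq> q" using c2 by (auto simp: card_2_iff)
        define w2 where "w2 = (if w = p then q else p)"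
        have w2: "w2 \<in> C" "w2 \<noteq> w" using pq wC by (auto simp: w2_def)
        have Cww: "C = {w, w2}" using pq wC by (auto simp: w2_def)
        obtain S0 where S0: "cutp G w w2 S0"
          using Suc.IH[OF mN, of w w2] c2 Cww w2 by (auto simp: G_def)
        show ?thesis
        proof (rule exI[of _ "S0 - {v}"], unfold cutp_def, intro conjI allI impI)
          show "w \<in> S0 - {v}" using S0 wv by (simp add: cutp_def)
          show "v \<notin> S0 - {v}" by simp
          fix u w' assume e: "{u, w'} \<in> dgraph c (Suc m)" and u: "u \<in> S0 - {v}" and w': "w' \<notin> S0 - {v}"
          show "{u, w'} = {w, v}"
          proof (cases "{u,w'} \<in> G - {C}")
            case True
            hence "w' \<noteq> v" using sf(3)[of u w'] by auto
            hence "{u,w'} = {w,w2}" using S0 True u w' unfolding cutp_def by auto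
            thus ?thesis using True Cww by auto
          next
            case False
            hence "{u,w'} \<in> (\<lambda>w. {v, w}) ` C" using e[unfolded sf1] c2 by auto
            hence "w' = v \<and> u \<in> C" using sf(5) u by auto
            moreover have "w2 \<notin> S0" using S0 by (simp add: cutp_def)
            ultimately show ?thesis using Cww u by auto
          qed
        qed
      qed
    qed
    from Suc.prems(2)[unfolded sf1] consider (new) w where "w \<in> C" "{x,y} = {v,w}"
      | (old) "{x,y} \<in> (if card C = 2 then G - {C} else G)" by auto
    thus ?thesis
    proof cases
      case new
      then consider "x = v" "y = w" | "x = w" "y = v" by (auto simp: doubleton_eq_iff)
      thus ?thesis
      proof cases
        case 1
        obtain S where "cutp (dgraph c (Suc m)) w v S" using key[OF new(1)] by blast
        hence "cutp (dgraph c (Suc m)) v w (- S)" by (rule cutp_flip)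
        thus ?thesis using 1 by blast
      next
        case 2 thus ?thesis using key[OF new(1)] by simp
      qed
    next
      case old
      hence xyG: "{x,y} \<in> G" by (auto split: if_splits)
      obtain S0 where S0: "cutp G x y S0" using Suc.IH[OF mN xyG[unfolded G_def] Suc.prems(3)] by (auto simp: G_def)
      have xv: "x \<noteq> v" "y \<noteq> v" using sf(3)[OF xyG] by auto
      have same: "\<forall>p\<in>C. \<forall>q\<in>C. p \<in> S0 \<longleftrightarrow> q \<in> S0"
      proof (intro ballI)
        fix p q assume pq: "p \<in> C" "q \<in> C"
        show "p \<in> S0 \<longleftrightarrow> q \<in> S0"
        proof (cases "p = q")
          case False
          hence c2: "card C = 2" "C \<in> G" using sf(4) pq by (auto simp: card_1_singleton_iff)
          hence Cpq: "C = {p,q}" using card2_eq pq False by metis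
          have ne: "C \<noteq> {x,y}" using old c2 by auto
          have qp: "{q,p} = C" using Cpq by auto
          have cut: "\<And>u w. {u,w}\<in>G \<Longrightarrow> u\<in>S0 \<Longrightarrow> w\<notin>S0 \<Longrightarrow> {u,w}={x,y}" using S0 by (simp add: cutp_def)
          show ?thesis
          proof
            assume "p \<in> S0" show "q \<in> S0"
            proof (rule ccontr)
              assume "q \<notin> S0" thus False using cut[of p q] \<open>p \<in> S0\<close> c2 Cpq ne by simp
            qed
          next
            assume "q \<in> S0" show "p \<in> S0"
            proof (rule ccontr)
              assume "p \<notin> S0" thus False using cut[of q p] \<open>q \<in> S0\<close> c2 qp ne by simp
            qed
          qed
        qed simp
      qed
      define S where "S = (if (\<exists>z\<in>C. z \<in> S0) then insert v S0 else S0 - {v})"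
      have Sold: "\<And>z. z \<noteq> v \<Longrightarrow> z \<in> S \<longleftrightarrow> z \<in> S0" by (auto simp: S_def)
      show ?thesis
      proof (rule exI[of _ S], unfold cutp_def, intro conjI allI impI)
        show "x \<in> S" using Sold[OF xv(1)] S0 by (simp add: cutp_def)
        show "y \<notin> S" using Sold[OF xv(2)] S0 by (simp add: cutp_def)
        fix u w' assume e: "{u, w'} \<in> dgraph c (Suc m)" and u: "u \<in> S" and w': "w' \<notin> S"
        show "{u, w'} = {x, y}"
        proof (cases "{u,w'} \<in> G")
          case True
          hence "u \<noteq> v" "w' \<noteq> v" using sf(3) by auto
          thus ?thesis using S0 True u w' Sold unfolding cutp_def by auto
        next
          case False
          hence "{u,w'} \<in> (\<lambda>w. {v, w}) ` C" using e[unfolded sf1] by (auto split: if_splits)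
          hence "(u = v \<and> w' \<in> C) \<or> (w' = v \<and> u \<in> C)" using sf(5) by auto
          moreover have "v \<notin> C" using sf(2) by auto
          ultimately consider "u = v" "w' \<in> C" "w' \<noteq> v" | "w' = v" "u \<in> C" "u \<noteq> v" by blast
          hence False
          proof cases
            case 1
            hence "\<exists>z\<in>C. z \<in> S0" using u by (auto simp: S_def split: if_splits)
            hence "w' \<in> S0" using same 1 by blast
            thus False using Sold[OF 1(3)] w' by simp
          next
            case 2
            hence "u \<in> S0" using Sold u by simp
            hence "v \<in> S" using 2 by (auto simp: S_def)
            thus False using w' 2 by simp
          qed
          thus ?thesis ..
        qed
      qed
    qed
  qed
qed

lemma dgraph_conn: "m \<le> N \<Longrightarrow> x \<in> {1..m} \<Longrightarrow> (\<lambda>a b. {a,b} \<in> dgraph c m)\<^sup>*\<^sup>* x 1"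
proof (induction m arbitrary: x)
  case 0 thus ?case by simp
next
  case (Suc m)
  show ?case
  proof (cases "m = 0")
    case True thus ?thesis using Suc.prems by simp
  next
    case False
    define v where "v = Suc m"
    define C where "C = c (Suc m)"
    define G where "G = dgraph c m"
    note sf = step_facts[OF Suc.prems(1) False, folded v_def C_def G_def]
    have sf1: "dgraph c (Suc m) = (if card C = 2 then G - {C} else G) \<union> (\<lambda>w. {v, w}) ` C"
      using sf(1) unfolding v_def .
    have mN: "m \<le> N" using Suc.prems by simp
    let ?E = "\<lambda>a b. {a,b} \<in> dgraph c (Suc m)"
    have vE: "{v,w} \<in> dgraph c (Suc m)" if "w \<in> C" for w unfolding sf1 using sf(5)[of v w] that by auto
    have Ev: "{w,v} \<in> dgraph c (Suc m)" if "w \<in> C" for w unfolding sf1 using sf(5)[of w v] that by auto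
    have lift: "?E\<^sup>*\<^sup>* a b" if "{a,b} \<in> G" for a b
    proof (cases "?E a b")
      case True thus ?thesis by auto
    next
      case False
      hence "card C = 2" "{a,b} = C" using that sf(5)[of a b] sf(3)[OF that] unfolding sf1 by (auto split: if_splits)
      hence "a \<in> C" "b \<in> C" by auto
      thus ?thesis using Ev vE by (meson rtranclp.rtrancl_into_rtrancl rtranclp.rtrancl_refl)
    qed
    have old: "?E\<^sup>*\<^sup>* y 1" if "y \<in> {1..m}" for y
      using rtranclp_lift[of "\<lambda>a b. {a,b} \<in> dgraph c m" ?E y 1] lift Suc.IH[OF mN that]
      by (simp add: G_def)
    show ?thesis
    proof (cases "x = v")
      case False thus ?thesis using old Suc.prems by (auto simp: v_def)
    next
      case True
      have "C \<noteq> {}" using sf(4) by auto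
      then obtain w where w: "w \<in> C" by auto
      hence "w \<in> {1..m}" using sf(2) by (auto simp: v_def)
      thus ?thesis using old vE[OF w] True by (meson converse_rtranclp_into_rtranclp)
    qed
  qed
qed


lemma Qr_eq: "a \<in> {1..N} \<Longrightarrow> Qr c a t = (if a = t then 1 else 0) + (\<Sum>b\<in>c a. Qr c b t)"
proof -
  assume a: "a \<in> {1..N}"
  have "{b\<in>c a. b < a} = c a" using cS[OF a] by auto
  thus ?thesis by (subst Qr.simps) simp
qed

lemma Qr_1: "a \<in> {1..N} \<Longrightarrow> Qr c a 1 \<ge> 1"
proof (induction a rule: less_induct)
  case (less a)
  show ?case
  proof (cases "a = 1")
    case True thus ?thesis using Qr_diag by simp
  next
    case False
    hence a2: "a \<in> {2..N}" using less.prems by auto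
    have "card (c a) \<ge> 1" using cC[OF a2] by auto
    have fin: "finite (c a)"
    proof (rule ccontr)
      assume "infinite (c a)" hence "card (c a) = 0" by simp
      thus False using \<open>card (c a) \<ge> 1\<close> by simp
    qed
    have ne: "c a \<noteq> {}" using \<open>card (c a) \<ge> 1\<close> by auto
    then obtain b where b: "b \<in> c a" by auto
    have bs: "b \<in> {1..N}" "b < a" using cS[OF less.prems] b less.prems by auto
    have "1 \<le> Qr c b 1" using less.IH[OF bs(2) bs(1)] .
    also have "\<dots> \<le> (\<Sum>b\<in>c a. Qr c b 1)" by (rule member_le_sum[OF b _ fin]) (simp add: Qr_nonneg)
    also have "\<dots> \<le> Qr c a 1" using Qr_eq[OF less.prems] False by simp
    finally show ?thesis .
  qed
qed

lemma PQ: "i \<in> {1..N} \<Longrightarrow> j \<in> {1..N} \<Longrightarrow> (\<Sum>k=1..N. prox c i k * Qr c k j) = (if i = j then 1 else 0)"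
proof -
  assume i: "i \<in> {1..N}" and j: "j \<in> {1..N}"
  have sub: "c i \<subseteq> {1..N}" using cS[OF i] i by auto
  have nii: "i \<notin> c i" using cS[OF i] by auto
  have "(\<Sum>k=1..N. prox c i k * Qr c k j) = (\<Sum>k=1..N. (if i = k then Qr c k j else 0) - (if k \<in> c i then Qr c k j else 0))"
    by (rule sum.cong) (auto simp: prox_def nii)
  also have "\<dots> = Qr c i j - (\<Sum>k\<in>c i. Qr c k j)"
    using i sub by (simp add: sum_subtractf sum.inter_restrict[symmetric] Int_absorb1 Int_absorb2)
  also have "\<dots> = (if i = j then 1 else 0)" using Qr_eq[OF i] by simp
  finally show ?thesis .
qed

lemma QP: "i \<in> {1..N} \<Longrightarrow> j \<in> {1..N} \<Longrightarrow> (\<Sum>k=1..N. Qr c i k * prox c k j) = (if i = j then 1 else 0)"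
  using right_inv_left[of N "prox c" "Qr c", OF PQ] by blast

lemma Qmat_eq: "i \<in> {1..N} \<Longrightarrow> j \<in> {1..N} \<Longrightarrow> Qmat N c i j = Qr c i j"
  unfolding Qmat_def by (rule mat_inv_eq[OF PQ])

definition Vr :: "nat \<Rightarrow> nat \<Rightarrow> real" where
  "Vr a b = (\<Sum>k=1..N. Qr c a k * Qr c b k)"

lemma MV: "i \<in> {1..N} \<Longrightarrow> j \<in> {1..N} \<Longrightarrow> (\<Sum>k=1..N. PtP N c i k * Vr k j) = (if i = j then 1 else 0)"
proof -
  assume i: "i \<in> {1..N}" and j: "j \<in> {1..N}"
  let ?P = "prox c" and ?Q = "Qr c"
  have "(\<Sum>k=1..N. PtP N c i k * Vr k j) = (\<Sum>k=1..N. \<Sum>l=1..N. \<Sum>m=1..N. ?P m i * (?P m k * ?Q k l) * ?Q j l)"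
    by (simp add: PtP_def Vr_def sum_distrib_left sum_distrib_right mult_ac)
  also have "\<dots> = (\<Sum>k=1..N. \<Sum>m=1..N. \<Sum>l=1..N. ?P m i * (?P m k * ?Q k l) * ?Q j l)"
    by (rule sum.cong[OF refl]) (rule sum.swap)
  also have "\<dots> = (\<Sum>m=1..N. \<Sum>k=1..N. \<Sum>l=1..N. ?P m i * (?P m k * ?Q k l) * ?Q j l)"
    by (rule sum.swap)
  also have "\<dots> = (\<Sum>m=1..N. \<Sum>l=1..N. \<Sum>k=1..N. ?P m i * (?P m k * ?Q k l) * ?Q j l)"
    by (rule sum.cong[OF refl]) (rule sum.swap)
  also have "\<dots> = (\<Sum>m=1..N. \<Sum>l=1..N. ?P m i * (\<Sum>k=1..N. ?P m k * ?Q k l) * ?Q j l)"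
    by (simp add: sum_distrib_left sum_distrib_right)
  also have "\<dots> = (\<Sum>m=1..N. \<Sum>l=1..N. ?P m i * (if m = l then 1 else 0) * ?Q j l)"
  proof (intro sum.cong refl)
    fix m l assume "m \<in> {1..N}" "l \<in> {1..N}"
    thus "?P m i * (\<Sum>k=1..N. ?P m k * ?Q k l) * ?Q j l = ?P m i * (if m = l then 1 else 0) * ?Q j l"
      using PQ[of m l] by simp
  qed
  also have "\<dots> = (\<Sum>m=1..N. ?Q j m * ?P m i)"
  proof (intro sum.cong refl)
    fix m assume m: "m \<in> {1..N}"
    have "(\<Sum>l=1..N. ?P m i * (if m = l then 1 else 0) * ?Q j l) = (\<Sum>l=1..N. if m = l then ?P m i * ?Q j l else 0)"
      by (rule sum.cong) auto
    also have "\<dots> = ?Q j m * ?P m i" using m by (simp add: sum.delta)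
    finally show "(\<Sum>l=1..N. ?P m i * (if m = l then 1 else 0) * ?Q j l) = ?Q j m * ?P m i" .
  qed
  also have "\<dots> = (if i = j then 1 else 0)" using QP[OF j i] by auto
  finally show ?thesis .
qed

lemma VM: "i \<in> {1..N} \<Longrightarrow> j \<in> {1..N} \<Longrightarrow> (\<Sum>k=1..N. Vr i k * PtP N c k j) = (if i = j then 1 else 0)"
  using right_inv_left[of N "PtP N c" Vr, OF MV] by blast

lemma Vmat_eq: "i \<in> {1..N} \<Longrightarrow> j \<in> {1..N} \<Longrightarrow> Vmat N c i j = Vr i j"
  unfolding Vmat_def by (rule mat_inv_eq[OF MV])

lemma Vr_pos: "a \<in> {1..N} \<Longrightarrow> b \<in> {1..N} \<Longrightarrow> Vr a b \<ge> 1"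
proof -
  assume a: "a \<in> {1..N}" and b: "b \<in> {1..N}"
  have one: "1 \<in> {1..N}" using a by auto
  have "1 \<le> Qr c a 1 * Qr c b 1" using Qr_1[OF a] Qr_1[OF b]
    using mult_mono[of 1 "Qr c a 1" 1 "Qr c b 1"] by simp
  also have "\<dots> \<le> Vr a b" unfolding Vr_def
    by (rule member_le_sum[OF one]) (auto intro: mult_nonneg_nonneg Qr_nonneg)
  finally show ?thesis .
qed

lemma Vr_sym: "Vr a b = Vr b a" unfolding Vr_def by (simp add: mult.commute)

lemma kcoef_pos: "n \<in> {1..N} \<Longrightarrow> kcoef N c n \<ge> 1"
proof -
  assume n: "n \<in> {1..N}"
  have "kcoef N c n = (\<Sum>k=1..N. Qr c n k)" unfolding kcoef_def
    by (rule sum.cong[OF refl]) (use Qmat_eq[OF n] in blast)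
  also have "\<dots> \<ge> Qr c n n" by (rule member_le_sum[OF n]) (auto simp: Qr_nonneg)
  finally show ?thesis using Qr_diag[of c n] by linarith
qed

lemma posdef:
  fixes x :: "nat \<Rightarrow> real"
  shows "(\<Sum>b=1..N. x b * (\<Sum>t=1..N. PtP N c b t * x t)) = (\<Sum>k=1..N. (\<Sum>b=1..N. prox c k b * x b)^2)"
proof -
  have "(\<Sum>b=1..N. x b * (\<Sum>t=1..N. PtP N c b t * x t)) = (\<Sum>b=1..N. \<Sum>t=1..N. \<Sum>k=1..N. (prox c k b * x b) * (prox c k t * x t))"
    by (simp add: PtP_def sum_distrib_left sum_distrib_right mult_ac)
  also have "\<dots> = (\<Sum>k=1..N. \<Sum>b=1..N. \<Sum>t=1..N. (prox c k b * x b) * (prox c k t * x t))"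
    by (subst sum.swap, rule sum.cong[OF refl], rule sum.swap)
  also have "\<dots> = (\<Sum>k=1..N. (\<Sum>b=1..N. prox c k b * x b)^2)"
    by (simp add: power2_eq_square sum_product)
  finally show ?thesis .
qed

lemma posdef_zero:
  fixes x :: "nat \<Rightarrow> real"
  assumes "(\<Sum>b=1..N. x b * (\<Sum>t=1..N. PtP N c b t * x t)) \<le> 0" and t: "t \<in> {1..N}"
  shows "x t = 0"
proof -
  have z: "\<forall>k\<in>{1..N}. (\<Sum>b=1..N. prox c k b * x b)^2 = 0"
  proof -
    have "(\<Sum>k=1..N. (\<Sum>b=1..N. prox c k b * x b)^2) \<ge> 0" by (intro sum_nonneg) auto
    hence "(\<Sum>k=1..N. (\<Sum>b=1..N. prox c k b * x b)^2) = 0" using assms(1) unfolding posdef by linarith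
    thus ?thesis by (subst (asm) sum_nonneg_eq_0_iff) auto
  qed
  have "x t = (\<Sum>b=1..N. (if t = b then 1 else 0) * x b)" using t by (simp add: sum.delta)
  also have "\<dots> = (\<Sum>b=1..N. (\<Sum>k=1..N. Qr c t k * prox c k b) * x b)"
  proof (intro sum.cong refl)
    fix b assume "b \<in> {1..N}"
    thus "(if t = b then 1 else 0) * x b = (\<Sum>k=1..N. Qr c t k * prox c k b) * x b"
      using QP[OF t, of b] by simp
  qed
  also have "\<dots> = (\<Sum>k=1..N. Qr c t k * (\<Sum>b=1..N. prox c k b * x b))"
    by (simp add: sum_distrib_left sum_distrib_right mult_ac) (rule sum.swap)
  also have "\<dots> = 0" using z by simp
  finally show ?thesis .
qed

lemma posdef_nonneg:
  fixes x :: "nat \<Rightarrow> real"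
  shows "(\<Sum>b=1..N. x b * (\<Sum>t=1..N. PtP N c b t * x t)) \<ge> 0"
  unfolding posdef by (auto intro: sum_nonneg)

lemma adj_sym: "adj N c a b \<Longrightarrow> adj N c b a"
  by (auto simp: adj_def insert_commute)

lemma adj_in: "adj N c a b \<Longrightarrow> a \<in> {1..N} \<and> b \<in> {1..N}"
  using old_vertex[of N a b] by (auto simp: adj_def)

lemma PtP_off: "a \<noteq> b \<Longrightarrow> PtP N c a b = (if adj N c a b then -1 else 0)"
  using PtP_inv[of N a b] by (simp add: PtP_def adj_def)

lemma adj_cut: "adj N c x y \<Longrightarrow> \<exists>S. x \<in> S \<and> y \<notin> S \<and> (\<forall>u w. adj N c u w \<longrightarrow> u \<in> S \<longrightarrow> w \<notin> S \<longrightarrow> {u,w} = {x,y})"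
  using dgraph_cut[of N x y] by (auto simp: adj_def cutp_def)

lemma adj_conn: "a \<in> {1..N} \<Longrightarrow> b \<in> {1..N} \<Longrightarrow> (adj N c)\<^sup>*\<^sup>* a b"
proof -
  assume a: "a \<in> {1..N}" and b: "b \<in> {1..N}"
  have e: "(adj N c)\<^sup>*\<^sup>* p q" if "{p,q} \<in> dgraph c N" for p q
  proof -
    have "p \<noteq> q" using old_vertex[OF order_refl that] by simp
    hence "adj N c p q" using that by (simp add: adj_def)
    thus ?thesis by simp
  qed
  have l: "(adj N c)\<^sup>*\<^sup>* x 1" if "x \<in> {1..N}" for x
    using rtranclp_lift[of "\<lambda>p q. {p,q} \<in> dgraph c N", OF e dgraph_conn[OF order_refl that]] by simp
  have sym: "(adj N c)\<^sup>*\<^sup>* y x" if "(adj N c)\<^sup>*\<^sup>* x y" for x y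
    using that by (induction rule: rtranclp_induct) (auto intro: converse_rtranclp_into_rtranclp adj_sym)
  show ?thesis using l[OF a] sym[OF l[OF b]] by (rule rtranclp_trans)
qed


lemma PtP_offdiag_nonpos: "a \<noteq> b \<Longrightarrow> PtP N c a b \<le> 0"
  using PtP_off[of a b] by simp

lemma D_lemma:
  fixes i n :: nat
  assumes i: "i \<in> {1..N}" and n: "n \<in> {1..N}"
  defines "y \<equiv> \<lambda>t. Vr t n - Vr t i * (Vr i n / Vr i i)"
  shows "\<And>j. j \<in> {1..N} \<Longrightarrow> j \<notin> branch N c i n \<Longrightarrow> y j = 0"
    and "\<And>j. j \<in> branch N c i n \<Longrightarrow> y j > 0"
proof -
  define B where "B = branch N c i n"
  define R where "R = (\<lambda>x y. adj N c x y \<and> x \<noteq> i \<and> y \<noteq> i)"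
  define \<alpha> where "\<alpha> = Vr i n / Vr i i"
  have Bdef: "B = {j \<in> {1..N}. n \<in> {1..N} \<and> n \<noteq> i \<and> R\<^sup>*\<^sup>* n j}"
    by (simp add: B_def R_def branch_def)
  have Vii: "Vr i i \<ge> 1" using Vr_pos[OF i i] .
  have yi: "y i = 0" using Vii by (simp add: y_def)
  have My: "(\<Sum>t=1..N. PtP N c b t * y t) = (if b = n then 1 else 0) - \<alpha> * (if b = i then 1 else 0)"
    if b: "b \<in> {1..N}" for b
  proof -
    have "(\<Sum>t=1..N. PtP N c b t * y t) = (\<Sum>t=1..N. PtP N c b t * Vr t n) - \<alpha> * (\<Sum>t=1..N. PtP N c b t * Vr t i)"
      by (simp add: y_def \<alpha>_def algebra_simps sum_subtractf sum_distrib_left)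
    thus ?thesis using MV[OF b n] MV[OF b i] by simp
  qed
  have Rne: "x \<noteq> i" if "R\<^sup>*\<^sup>* n x" "n \<noteq> i" for x
    using that by (induction rule: rtranclp_induct) (auto simp: R_def)
  have iB: "i \<notin> B" using Bdef Rne by auto
  have closed: "b \<in> B" if "t \<in> B" "adj N c t b" "b \<noteq> i" for t b
  proof -
    have "t \<noteq> i" using iB that(1) by auto
    hence "R t b" using that by (auto simp: R_def)
    moreover have "b \<in> {1..N}" using adj_in[OF that(2)] by simp
    ultimately show ?thesis using that(1) Bdef by (auto intro: rtranclp.rtrancl_into_rtrancl)
  qed
  have nB: "n \<in> B" if "n \<noteq> i" using that n Bdef by auto
  have zero_out: "y j = 0" if j: "j \<in> {1..N}" "j \<notin> B" for j
  proof (cases "j = i")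
    case True thus ?thesis using yi by simp
  next
    case False
    define C where "C = {1..N} - B - {i}"
    define z where "z = (\<lambda>t. if t \<in> C then y t else 0)"
    have Mz: "(\<Sum>t=1..N. PtP N c b t * z t) = 0" if b: "b \<in> C" for b
    proof -
      have "(\<Sum>t=1..N. PtP N c b t * z t) = (\<Sum>t=1..N. PtP N c b t * y t)"
      proof (rule sum.cong[OF refl])
        fix t assume t: "t \<in> {1..N}"
        show "PtP N c b t * z t = PtP N c b t * y t"
        proof (cases "t \<in> C")
          case True thus ?thesis by (simp add: z_def)
        next
          case False
          hence "t = i \<or> t \<in> B" using t by (auto simp: C_def)
          thus ?thesis
          proof
            assume "t = i" thus ?thesis using yi False by (simp add: z_def)
          next
            assume tB: "t \<in> B"
            have bt: "b \<noteq> t" "b \<notin> B" "b \<noteq> i" using b tB by (auto simp: C_def)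
            have "\<not> adj N c b t" using closed[OF tB _ bt(3)] adj_sym bt(2) by blast
            hence "PtP N c b t = 0" using PtP_off[OF bt(1)] by simp
            thus ?thesis by simp
          qed
        qed
      qed
      also have "\<dots> = 0"
      proof -
        have "b \<noteq> n" using b nB by (cases "n = i") (auto simp: C_def)
        moreover have "b \<noteq> i" using b by (auto simp: C_def)
        ultimately show ?thesis using My[of b] b by (simp add: C_def)
      qed
      finally show ?thesis .
    qed
    have "(\<Sum>b=1..N. z b * (\<Sum>t=1..N. PtP N c b t * z t)) = 0"
    proof (rule sum.neutral, intro ballI)
      fix b assume "b \<in> {1..N}"
      show "z b * (\<Sum>t=1..N. PtP N c b t * z t) = 0"
      proof (cases "b \<in> C")
        case True thus ?thesis using Mz[OF True] by simp
      next
        case False thus ?thesis by (simp add: z_def)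
      qed
    qed
    hence "z j = 0" using posdef_zero[of z j] j by simp
    moreover have "j \<in> C" using j False by (auto simp: C_def)
    ultimately show ?thesis by (simp add: z_def)
  qed
  show "\<And>j. j \<in> {1..N} \<Longrightarrow> j \<notin> branch N c i n \<Longrightarrow> y j = 0" using zero_out by (simp add: B_def)
  have ynn: "y t \<ge> 0" if t: "t \<in> {1..N}" for t
  proof -
    define w where "w = (\<lambda>t. max (- y t) 0)"
    define p where "p = (\<lambda>t. max (y t) 0)"
    have yp: "y t = p t - w t" for t by (simp add: w_def p_def max_def)
    have wi: "w i = 0" using yi by (simp add: w_def)
    have A: "(\<Sum>b=1..N. w b * (\<Sum>t=1..N. PtP N c b t * y t)) = (\<Sum>b=1..N. w b * ((if b = n then 1 else 0) - \<alpha> * (if b = i then 1 else 0)))"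
    proof (rule sum.cong[OF refl])
      fix b assume "b \<in> {1..N}"
      thus "w b * (\<Sum>t=1..N. PtP N c b t * y t) = w b * ((if b = n then 1 else 0) - \<alpha> * (if b = i then 1 else 0))"
        using My[of b] by simp
    qed
    also have "\<dots> = (\<Sum>b=1..N. (if b = n then w b else 0))"
      by (rule sum.cong[OF refl]) (use wi in auto)
    also have "\<dots> = w n" using n by (simp add: sum.delta sum.delta')
    finally have A: "(\<Sum>b=1..N. w b * (\<Sum>t=1..N. PtP N c b t * y t)) = w n" .
    have Bp: "(\<Sum>b=1..N. w b * (\<Sum>t=1..N. PtP N c b t * p t)) \<le> 0"
    proof (rule sum_nonpos)
      fix b assume "b \<in> {1..N}"
      have "w b * (\<Sum>t=1..N. PtP N c b t * p t) = (\<Sum>t=1..N. w b * PtP N c b t * p t)"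
        by (simp add: sum_distrib_left mult.assoc)
      also have "\<dots> \<le> 0"
      proof (rule sum_nonpos)
        fix t show "w b * PtP N c b t * p t \<le> 0"
        proof (cases "b = t")
          case True thus ?thesis by (simp add: w_def p_def max_def)
        next
          case False
          have "w b \<ge> 0" "p t \<ge> 0" by (auto simp: w_def p_def)
          moreover have "PtP N c b t \<le> 0" using PtP_offdiag_nonpos[OF False] .
          ultimately show ?thesis by (simp add: mult_nonneg_nonpos mult_nonpos_nonneg)
        qed
      qed
      finally show "w b * (\<Sum>t=1..N. PtP N c b t * p t) \<le> 0" .
    qed
    have "(\<Sum>b=1..N. w b * (\<Sum>t=1..N. PtP N c b t * y t)) = (\<Sum>b=1..N. w b * (\<Sum>t=1..N. PtP N c b t * p t)) - (\<Sum>b=1..N. w b * (\<Sum>t=1..N. PtP N c b t * w t))"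
      by (simp add: yp algebra_simps sum_subtractf sum_distrib_left)
    hence "(\<Sum>b=1..N. w b * (\<Sum>t=1..N. PtP N c b t * w t)) \<le> 0"
      using A Bp by (simp add: w_def)
    hence "w t = 0" using posdef_zero t by blast
    thus ?thesis by (simp add: w_def max_def split: if_splits)
  qed
  have claim: "x' \<noteq> n \<and> (\<forall>t. adj N c x' t \<longrightarrow> y t = 0)"
    if x': "x' \<in> {1..N}" "x' \<noteq> i" "y x' = 0" for x'
  proof -
    have terms: "\<forall>t\<in>{1..N}. - (PtP N c x' t * y t) \<ge> 0"
    proof
      fix t assume t: "t \<in> {1..N}"
      show "- (PtP N c x' t * y t) \<ge> 0"
      proof (cases "t = x'")
        case True thus ?thesis using x' by simp
      next
        case False thus ?thesis using PtP_offdiag_nonpos[of x' t] ynn[OF t]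
          by (simp add: mult_nonpos_nonneg)
      qed
    qed
    have s: "(\<Sum>t=1..N. - (PtP N c x' t * y t)) = - (if x' = n then 1 else 0)"
      using My[OF x'(1)] x'(2) by (simp add: sum_negf)
    have s0: "(\<Sum>t=1..N. - (PtP N c x' t * y t)) \<ge> 0" using terms by (intro sum_nonneg) blast
    hence xn: "x' \<noteq> n" using s by (auto split: if_splits)
    hence "(\<Sum>t=1..N. - (PtP N c x' t * y t)) = 0" using s by simp
    hence all0: "\<forall>t\<in>{1..N}. - (PtP N c x' t * y t) = 0"
      using terms by (subst (asm) sum_nonneg_eq_0_iff) auto
    have "y t = 0" if "adj N c x' t" for t
    proof -
      have t: "t \<in> {1..N}" "x' \<noteq> t" using adj_in[OF that] that by (auto simp: adj_def)
      have "PtP N c x' t = -1" using PtP_off[OF t(2)] that by simp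
      moreover have "- (PtP N c x' t * y t) = 0" using all0 t(1) by blast
      ultimately show ?thesis by simp
    qed
    thus ?thesis using xn by blast
  qed
  show "\<And>j. j \<in> branch N c i n \<Longrightarrow> y j > 0"
  proof -
    fix j assume "j \<in> branch N c i n"
    hence j: "j \<in> {1..N}" "n \<noteq> i" "R\<^sup>*\<^sup>* n j" using Bdef B_def by auto
    have "R\<^sup>*\<^sup>* n x \<Longrightarrow> y x > 0" for x
    proof (induction rule: rtranclp_induct)
      case base
      show ?case
      proof (rule ccontr)
        assume "\<not> y n > 0" hence "y n = 0" using ynn[OF n] by simp
        thus False using claim[OF n j(2)] by simp
      qed
    next
      case (step x x')
      have x': "x' \<in> {1..N}" "x' \<noteq> i" "adj N c x x'" using step(2) adj_in by (auto simp: R_def)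
      show ?case
      proof (rule ccontr)
        assume "\<not> y x' > 0" hence "y x' = 0" using ynn[OF x'(1)] by simp
        hence "y x = 0" using claim[OF x'(1,2)] adj_sym[OF x'(3)] by blast
        thus False using step(3) by simp
      qed
    qed
    thus "y j > 0" using j(3) by blast
  qed
qed


definition Rav :: "nat \<Rightarrow> nat \<Rightarrow> nat \<Rightarrow> bool" where
  "Rav p = (\<lambda>a b. adj N c a b \<and> a \<noteq> p \<and> b \<noteq> p)"

lemma branch_iff: "j \<in> branch N c p q \<longleftrightarrow> j \<in> {1..N} \<and> q \<in> {1..N} \<and> q \<noteq> p \<and> (Rav p)\<^sup>*\<^sup>* q j"
  by (simp add: branch_def Rav_def)

lemma cut_stay:
  assumes cut: "\<forall>u w. adj N c u w \<longrightarrow> u \<in> S \<longrightarrow> w \<notin> S \<longrightarrow> {u,w} = {x,y}"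
    and p: "p = x \<or> p = y" and walk: "(Rav p)\<^sup>*\<^sup>* a b"
  shows "a \<in> S \<longleftrightarrow> b \<in> S"
  using walk
proof (induction rule: rtranclp_induct)
  case base thus ?case by simp
next
  case (step z b)
  have zb: "adj N c z b" "z \<noteq> p" "b \<noteq> p" using step(2) by (auto simp: Rav_def)
  have "z \<in> S \<longleftrightarrow> b \<in> S"
  proof
    assume "z \<in> S" show "b \<in> S"
    proof (rule ccontr)
      assume "b \<notin> S" hence "{z,b} = {x,y}" using cut zb(1) \<open>z \<in> S\<close> by blast
      thus False using p zb by (auto simp: doubleton_eq_iff)
    qed
  next
    assume "b \<in> S" show "z \<in> S"
    proof (rule ccontr)
      assume "z \<notin> S" hence "{b,z} = {x,y}" using cut adj_sym[OF zb(1)] \<open>b \<in> S\<close> by blast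
      thus False using p zb by (auto simp: doubleton_eq_iff)
    qed
  qed
  thus ?case using step(3) by simp
qed

lemma branch_disj:
  assumes im: "adj N c i m"
    and nS: "n = m \<or> (\<exists>i0. adj N c i0 m \<and> i0 \<noteq> i \<and> (Rav m)\<^sup>*\<^sup>* i0 n)"
  shows "branch N c m i \<inter> branch N c i n = {}"
proof -
  obtain S where S: "i \<in> S" "m \<notin> S" and cut: "\<forall>u w. adj N c u w \<longrightarrow> u \<in> S \<longrightarrow> w \<notin> S \<longrightarrow> {u,w} = {i,m}"
    using adj_cut[OF im] by blast
  have n_out: "n \<notin> S"
    using nS
  proof
    assume "n = m" thus ?thesis using S by simp
  next
    assume "\<exists>i0. adj N c i0 m \<and> i0 \<noteq> i \<and> (Rav m)\<^sup>*\<^sup>* i0 n"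
    then obtain i0 where i0: "adj N c i0 m" "i0 \<noteq> i" "(Rav m)\<^sup>*\<^sup>* i0 n" by blast
    have "i0 \<notin> S"
    proof
      assume "i0 \<in> S" hence "{i0,m} = {i,m}" using cut i0(1) S(2) by blast
      thus False using i0(2) im by (auto simp: doubleton_eq_iff adj_def)
    qed
    thus ?thesis using cut_stay[OF cut _ i0(3)] by simp
  qed
  show ?thesis
  proof (rule ccontr)
    assume "branch N c m i \<inter> branch N c i n \<noteq> {}"
    then obtain j where j1: "j \<in> branch N c m i" and j2: "j \<in> branch N c i n" by blast
    have "j \<in> S" using j1 cut_stay[OF cut, of m i j] S by (simp add: branch_iff)
    moreover have "j \<notin> S" using j2 cut_stay[OF cut, of i n j] n_out by (simp add: branch_iff)
    ultimately show False by simp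
  qed
qed

lemma branch_sub:
  assumes mi: "adj N c m i0" and walk: "(Rav m)\<^sup>*\<^sup>* i0 n"
  shows "branch N c i0 n \<subseteq> branch N c m i0"
proof
  fix j assume j: "j \<in> branch N c i0 n"
  hence j': "j \<in> {1..N}" "n \<in> {1..N}" "n \<noteq> i0" "(Rav i0)\<^sup>*\<^sup>* n j" by (auto simp: branch_iff)
  obtain S where S: "m \<in> S" "i0 \<notin> S" and cut: "\<forall>u w. adj N c u w \<longrightarrow> u \<in> S \<longrightarrow> w \<notin> S \<longrightarrow> {u,w} = {m,i0}"
    using adj_cut[OF mi] by blast
  have nS: "n \<notin> S" using cut_stay[OF cut _ walk] S by simp
  have pres: "w \<notin> S" if "Rav i0 u w" "u \<notin> S" for u w
    using cut_stay[OF cut _ r_into_rtranclp[where r="Rav i0", OF that(1)]] that(2) by simp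
  have "(\<lambda>u w. Rav i0 u w \<and> u \<notin> S \<and> w \<notin> S)\<^sup>*\<^sup>* n j"
    by (rule restrict_walk[where R="Rav i0" and P="\<lambda>x. x \<notin> S", OF j'(4) nS pres])
  hence "(Rav m)\<^sup>*\<^sup>* n j"
    by (rule rtranclp_mono_rel) (use S(1) in \<open>auto simp: Rav_def\<close>)
  hence "(Rav m)\<^sup>*\<^sup>* i0 j" using walk by (rule rtranclp_trans[rotated])
  moreover have "i0 \<in> {1..N}" "i0 \<noteq> m" using adj_in[OF mi] mi by (auto simp: adj_def)
  ultimately show "j \<in> branch N c m i0" using j'(1) by (simp add: branch_iff)
qed

lemma gdist_walk: "a \<in> {1..N} \<Longrightarrow> b \<in> {1..N} \<Longrightarrow> (adj N c ^^ gdist N c a b) a b"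
proof -
  assume a: "a \<in> {1..N}" and b: "b \<in> {1..N}"
  obtain k where k: "(adj N c ^^ k) a b" using rtranclp_imp_relpowp[OF adj_conn[OF a b]] by blast
  show ?thesis unfolding gdist_def by (rule LeastI[of _ k]) (rule k)
qed

lemma gdist_le: "(adj N c ^^ k) a b \<Longrightarrow> gdist N c a b \<le> k"
  unfolding gdist_def by (rule Least_le)

lemma gdist_next:
  assumes m: "m \<in> {1..N}" and n: "n \<in> {1..N}" and d: "gdist N c m n \<ge> 2"
  shows "\<exists>i. adj N c m i \<and> gdist N c i n + 1 = gdist N c m n"
proof -
  define d where "d = gdist N c m n"
  obtain k where k: "d = Suc k" using d by (cases d) (auto simp: d_def)
  have "(adj N c ^^ Suc k) m n" using gdist_walk[OF m n] k by (simp add: d_def)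
  then obtain i where i: "adj N c m i" "(adj N c ^^ k) i n" using relpowp_Suc_D2[where P="adj N c" and n=k and x=m and z=n] by blast
  have "gdist N c i n \<le> k" using gdist_le[OF i(2)] .
  moreover have "gdist N c i n \<ge> k"
  proof (rule ccontr)
    assume "\<not> gdist N c i n \<ge> k"
    hence lt: "gdist N c i n < k" by simp
    have iN: "i \<in> {1..N}" using adj_in[OF i(1)] by simp
    have "(adj N c ^^ Suc (gdist N c i n)) m n"
      by (rule relpowp_Suc_I2[OF i(1) gdist_walk[OF iN n]])
    hence "d \<le> Suc (gdist N c i n)" using gdist_le by (simp add: d_def)
    thus False using lt k by simp
  qed
  ultimately show ?thesis using i(1) k by (auto simp: d_def)
qed

lemma gdist_walk_avoid:
  assumes m: "m \<in> {1..N}" and n: "n \<in> {1..N}" and d: "gdist N c m n \<ge> 2"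
    and i: "adj N c m i" and gi: "gdist N c i n + 1 = gdist N c m n"
  shows "(Rav m)\<^sup>*\<^sup>* i n"
proof -
  have iN: "i \<in> {1..N}" using adj_in[OF i] by simp
  have im: "i \<noteq> m" using i by (simp add: adj_def)
  from walk_split[OF gdist_walk[OF iN n] im] show ?thesis
  proof
    assume "(\<lambda>a b. adj N c a b \<and> a \<noteq> m \<and> b \<noteq> m)\<^sup>*\<^sup>* i n" thus ?thesis by (simp add: Rav_def)
  next
    assume "\<exists>k'<gdist N c i n. (adj N c ^^ k') m n"
    then obtain k' where "k' < gdist N c i n" "(adj N c ^^ k') m n" by blast
    hence "gdist N c m n \<le> k'" using gdist_le by blast
    thus ?thesis using \<open>k' < gdist N c i n\<close> gi by simp
  qed
qed

lemma gdist_small: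
  assumes m: "m \<in> {1..N}" and n: "n \<in> {1..N}" and d: "gdist N c m n \<le> 1"
  shows "n = m \<or> adj N c m n"
proof -
  have w: "(adj N c ^^ gdist N c m n) m n" by (rule gdist_walk[OF m n])
  show ?thesis
  proof (cases "gdist N c m n")
    case 0 thus ?thesis using w by simp
  next
    case (Suc k) hence "k = 0" using d by simp
    thus ?thesis using w Suc by auto
  qed
qed


lemma branch_disj2:
  assumes i1: "adj N c i1 m" and i2: "adj N c i2 m" and ne: "i1 \<noteq> i2"
  shows "branch N c m i1 \<inter> branch N c m i2 = {}"
proof -
  obtain S where S: "i1 \<in> S" "m \<notin> S" and cut: "\<forall>u w. adj N c u w \<longrightarrow> u \<in> S \<longrightarrow> w \<notin> S \<longrightarrow> {u,w} = {i1,m}"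
    using adj_cut[OF i1] by blast
  have "i2 \<notin> S"
  proof
    assume "i2 \<in> S" hence "{i2,m} = {i1,m}" using cut i2 S(2) by blast
    thus False using ne i2 by (auto simp: doubleton_eq_iff adj_def)
  qed
  show ?thesis
  proof (rule ccontr)
    assume "branch N c m i1 \<inter> branch N c m i2 \<noteq> {}"
    then obtain j where j1: "j \<in> branch N c m i1" and j2: "j \<in> branch N c m i2" by blast
    have "j \<in> S" using j1 cut_stay[OF cut, of m i1 j] S by (simp add: branch_iff)
    moreover have "j \<notin> S" using j2 cut_stay[OF cut, of m i2 j] \<open>i2 \<notin> S\<close> by (simp add: branch_iff)
    ultimately show False by simp
  qed
qed

lemma ecoef_Vr: "n \<in> {1..N} \<Longrightarrow> ecoef N c h n = (\<Sum>t=1..N. h t * Vr t n)"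
  unfolding ecoef_def by (rule sum.cong[OF refl]) (simp add: Vmat_eq)

lemma ecoef_hatc: "n \<in> {1..N} \<Longrightarrow> ecoef N c (hatc N c F) n = F n"
proof -
  assume n: "n \<in> {1..N}"
  have "ecoef N c (hatc N c F) n = (\<Sum>t=1..N. (\<Sum>l=1..N. F l * PtP N c l t) * Vr t n)"
    using ecoef_Vr[OF n] by (simp add: hatc_def)
  also have "\<dots> = (\<Sum>l=1..N. F l * (\<Sum>t=1..N. PtP N c l t * Vr t n))"
    by (simp add: sum_distrib_left sum_distrib_right mult.assoc) (rule sum.swap)
  also have "\<dots> = (\<Sum>l=1..N. F l * (if l = n then 1 else 0))"
  proof (rule sum.cong[OF refl])
    fix l assume "l \<in> {1..N}" thus "F l * (\<Sum>t=1..N. PtP N c l t * Vr t n) = F l * (if l = n then 1 else 0)"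
      using MV[of l n] n by simp
  qed
  also have "\<dots> = F n" using n by (simp add: sum.delta)
  finally show ?thesis .
qed

lemma antinef_nonneg: "antinef N c F \<Longrightarrow> n \<in> {1..N} \<Longrightarrow> F n \<ge> 0"
proof -
  assume a: "antinef N c F" and n: "n \<in> {1..N}"
  have "F n = (\<Sum>t=1..N. hatc N c F t * Vr t n)" using ecoef_hatc[OF n] ecoef_Vr[OF n] by simp
  also have "\<dots> \<ge> 0"
  proof (rule sum_nonneg)
    fix t assume t: "t \<in> {1..N}"
    show "hatc N c F t * Vr t n \<ge> 0" using a t Vr_pos[OF t n] by (simp add: antinef_def)
  qed
  finally show ?thesis .
qed


lemma rhat_sum: "i \<in> {1..N} \<Longrightarrow> j \<in> {1..N} \<Longrightarrow> n \<in> {1..N} \<Longrightarrow>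
  (\<Sum>t=1..N. rhat N c i j t * Vr t n) = Vr j n - Vr j i * (Vr i n / Vr i i)"
proof -
  assume i: "i \<in> {1..N}" and j: "j \<in> {1..N}" and n: "n \<in> {1..N}"
  have r: "rho N c i j i = Vr j i / Vr i i" using i j by (simp add: rho_def Vmat_eq)
  have "(\<Sum>t=1..N. rhat N c i j t * Vr t n) = (\<Sum>t=1..N. (if t = j then Vr t n else 0) - rho N c i j i * (if t = i then Vr t n else 0))"
    by (rule sum.cong[OF refl]) (simp add: rhat_def algebra_simps)
  also have "\<dots> = Vr j n - rho N c i j i * Vr i n"
    using i j by (simp add: sum_subtractf sum_distrib_left[symmetric] sum.delta)
  finally show ?thesis using r by simp
qed

lemma modif_eq:
  assumes m: "m \<in> {1..N}" and n: "n \<in> {1..N}"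
  shows "ecoef N c (modif N c m fh fh) n = ecoef N c fh n -
    (\<Sum>i\<in>{i\<in>{1..N}. adj N c i m}. \<Sum>j\<in>branch N c m i. fh j * (Vr j n - Vr j i * (Vr i n / Vr i i)))"
proof -
  let ?Nb = "{i\<in>{1..N}. adj N c i m}"
  let ?h = "\<lambda>i j t. fh j * rhat N c i j t"
  have "ecoef N c (modif N c m fh fh) n = (\<Sum>t=1..N. fh t * Vr t n) - (\<Sum>t=1..N. (\<Sum>i\<in>?Nb. \<Sum>j\<in>branch N c m i. ?h i j t) * Vr t n)"
    using ecoef_Vr[OF n] by (simp add: modif_def algebra_simps sum_subtractf)
  also have "(\<Sum>t=1..N. (\<Sum>i\<in>?Nb. \<Sum>j\<in>branch N c m i. ?h i j t) * Vr t n) = (\<Sum>t=1..N. \<Sum>i\<in>?Nb. \<Sum>j\<in>branch N c m i. ?h i j t * Vr t n)"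
    by (simp add: sum_distrib_right)
  also have "\<dots> = (\<Sum>i\<in>?Nb. \<Sum>t=1..N. \<Sum>j\<in>branch N c m i. ?h i j t * Vr t n)"
    by (rule sum.swap)
  also have "\<dots> = (\<Sum>i\<in>?Nb. \<Sum>j\<in>branch N c m i. \<Sum>t=1..N. ?h i j t * Vr t n)"
    by (rule sum.cong[OF refl]) (rule sum.swap)
  also have "\<dots> = (\<Sum>i\<in>?Nb. \<Sum>j\<in>branch N c m i. fh j * (Vr j n - Vr j i * (Vr i n / Vr i i)))"
  proof (intro sum.cong refl)
    fix i j assume i: "i \<in> ?Nb" and j: "j \<in> branch N c m i"
    have "(\<Sum>t=1..N. ?h i j t * Vr t n) = fh j * (\<Sum>t=1..N. rhat N c i j t * Vr t n)"
      by (simp add: sum_distrib_left mult.assoc)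
    also have "\<dots> = fh j * (Vr j n - Vr j i * (Vr i n / Vr i i))"
      using rhat_sum[of i j n] i j n by (simp add: branch_iff)
    finally show "(\<Sum>t=1..N. ?h i j t * Vr t n) = fh j * (Vr j n - Vr j i * (Vr i n / Vr i i))" .
  qed
  finally show ?thesis using ecoef_Vr[OF n] by simp
qed


lemma main_ctx:
  fixes m n :: nat and f g :: "nat \<Rightarrow> int"
  assumes m: "m \<in> {1..N}" and n: "n \<in> {1..N}"
    and af: "antinef N c (\<lambda>i. real_of_int (f i))"
    and fnz: "\<exists>i\<in>{1..N}. f i \<noteq> 0"
    and ag: "antinef N c (\<lambda>i. real_of_int (g i))"
  shows "lam N c (\<lambda>i. real_of_int (g i))
            (ecoef N c (modif N c m (hatc N c (\<lambda>i. real_of_int (f i)))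
                                     (hatc N c (\<lambda>i. real_of_int (f i))))) n
         \<ge> lam N c (\<lambda>i. real_of_int (g i)) (\<lambda>i. real_of_int (f i)) n
       \<and> (lam N c (\<lambda>i. real_of_int (g i))
            (ecoef N c (modif N c m (hatc N c (\<lambda>i. real_of_int (f i)))
                                     (hatc N c (\<lambda>i. real_of_int (f i))))) n
          = lam N c (\<lambda>i. real_of_int (g i)) (\<lambda>i. real_of_int (f i)) n
          \<longleftrightarrow> gdist N c m n \<le> 1 \<or>
              (\<exists>i. adj N c m i \<and> gdist N c i n + 1 = gdist N c m n \<and>
                   (\<forall>j\<in>branch N c i n. hatc N c (\<lambda>l. real_of_int (f l)) j = 0)))"
proof -
  define F where "F = (\<lambda>i. real_of_int (f i))"
  define G where "G = (\<lambda>i. real_of_int (g i))"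
  define fh where "fh = hatc N c F"
  define Nb where "Nb = {i\<in>{1..N}. adj N c i m}"
  define Dv where "Dv = (\<lambda>i j. Vr j n - Vr j i * (Vr i n / Vr i i))"
  define S where "S = (\<Sum>i\<in>Nb. \<Sum>j\<in>branch N c m i. fh j * Dv i j)"
  define Cond where "Cond = (\<forall>i\<in>Nb. \<forall>j\<in>branch N c m i. j \<in> branch N c i n \<longrightarrow> fh j = 0)"
  define RHS where "RHS = (gdist N c m n \<le> 1 \<or>
              (\<exists>i. adj N c m i \<and> gdist N c i n + 1 = gdist N c m n \<and> (\<forall>j\<in>branch N c i n. fh j = 0)))"
  have fh_nn: "fh t \<ge> 0" if "t \<in> {1..N}" for t using af that by (simp add: antinef_def fh_def F_def)
  have finNb: "finite Nb" by (simp add: Nb_def)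
  have NbN: "i \<in> {1..N}" "adj N c i m" if "i \<in> Nb" for i using that by (auto simp: Nb_def)
  have finB: "finite (branch N c p q)" for p q by (rule finite_subset[of _ "{1..N}"]) (auto simp: branch_iff)
  have BN: "j \<in> {1..N}" if "j \<in> branch N c p q" for j p q using that by (simp add: branch_iff)
  have Dv_props: "Dv i j \<ge> 0 \<and> (Dv i j > 0 \<longleftrightarrow> j \<in> branch N c i n)" if "i \<in> {1..N}" "j \<in> {1..N}" for i j
  proof (cases "j \<in> branch N c i n")
    case True thus ?thesis using D_lemma(2)[OF that(1) n True] by (simp add: Dv_def)
  next
    case False thus ?thesis using D_lemma(1)[OF that(1) n that(2) False] by (simp add: Dv_def)
  qed
  have term_nn: "fh j * Dv i j \<ge> 0" if "i \<in> Nb" "j \<in> branch N c m i" for i j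
    using fh_nn[OF BN[OF that(2)]] Dv_props[OF NbN(1)[OF that(1)] BN[OF that(2)]] by simp
  have S_nn: "S \<ge> 0" unfolding S_def using term_nn by (intro sum_nonneg) auto
  have S0: "S = 0 \<longleftrightarrow> Cond"
  proof -
    have "S = 0 \<longleftrightarrow> (\<forall>i\<in>Nb. (\<Sum>j\<in>branch N c m i. fh j * Dv i j) = 0)"
      unfolding S_def using finNb term_nn by (subst sum_nonneg_eq_0_iff) (auto intro: sum_nonneg)
    also have "\<dots> \<longleftrightarrow> (\<forall>i\<in>Nb. \<forall>j\<in>branch N c m i. fh j * Dv i j = 0)"
      using finB term_nn by (simp add: sum_nonneg_eq_0_iff)
    also have "\<dots> \<longleftrightarrow> Cond"
    proof -
      have "fh j * Dv i j = 0 \<longleftrightarrow> (j \<in> branch N c i n \<longrightarrow> fh j = 0)" if "i \<in> Nb" "j \<in> branch N c m i" for i j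
        using Dv_props[OF NbN(1)[OF that(1)] BN[OF that(2)]] by auto
      thus ?thesis unfolding Cond_def by auto
    qed
    finally show ?thesis .
  qed
  have fm: "ecoef N c (modif N c m fh fh) n = F n - S"
    using modif_eq[OF m n, of fh] ecoef_hatc[OF n, of F] by (simp add: S_def Dv_def Nb_def fh_def)
  have fh_nz: "\<exists>t\<in>{1..N}. fh t > 0"
  proof (rule ccontr)
    assume "\<not> (\<exists>t\<in>{1..N}. fh t > 0)"
    hence z: "\<forall>t\<in>{1..N}. fh t = 0" using fh_nn by force
    obtain i where i: "i \<in> {1..N}" "f i \<noteq> 0" using fnz by blast
    have "F i = (\<Sum>t=1..N. fh t * Vr t i)" using ecoef_hatc[OF i(1), of F] ecoef_Vr[OF i(1)] by (simp add: fh_def)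
    also have "\<dots> = 0" using z by simp
    finally show False using i by (simp add: F_def)
  qed
  have pos: "F n - S > 0"
  proof -
    define U where "U = \<Union> (branch N c m ` Nb)"
    have UN: "U \<subseteq> {1..N}" by (auto simp: U_def branch_iff)
    have Fn: "F n = (\<Sum>t\<in>{1..N}. fh t * Vr t n)" using ecoef_hatc[OF n, of F] ecoef_Vr[OF n] by (simp add: fh_def)
    also have "\<dots> = (\<Sum>t\<in>{1..N} - U. fh t * Vr t n) + (\<Sum>t\<in>U. fh t * Vr t n)"
      using UN by (simp add: sum.subset_diff)
    also have "(\<Sum>t\<in>U. fh t * Vr t n) = (\<Sum>i\<in>Nb. \<Sum>j\<in>branch N c m i. fh j * Vr j n)"
      unfolding U_def
    proof (rule sum.UNION_disjoint[OF finNb])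
      show "\<forall>i\<in>Nb. finite (branch N c m i)" using finB by simp
      show "\<forall>i\<in>Nb. \<forall>j\<in>Nb. i \<noteq> j \<longrightarrow> branch N c m i \<inter> branch N c m j = {}"
        using branch_disj2 NbN by blast
    qed
    finally have "F n - S = (\<Sum>t\<in>{1..N} - U. fh t * Vr t n) + (\<Sum>i\<in>Nb. \<Sum>j\<in>branch N c m i. fh j * (Vr j n - Dv i j))"
      unfolding S_def by (simp add: algebra_simps sum_subtractf)
    also have "\<dots> > 0"
    proof -
      have t1: "fh t * Vr t n \<ge> 0" if "t \<in> {1..N}" for t
        using fh_nn[OF that] Vr_pos[OF that n] by simp
      have Vd: "Vr j n - Dv i j > 0" if "i \<in> {1..N}" "j \<in> {1..N}" for i j
      proof -
        have "Vr j n - Dv i j = Vr j i * (Vr i n / Vr i i)" by (simp add: Dv_def)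
        moreover have "Vr j i > 0" "Vr i n > 0" "Vr i i > 0"
          using Vr_pos[OF that(2,1)] Vr_pos[OF that(1) n] Vr_pos[OF that(1,1)] by linarith+
        ultimately show ?thesis by simp
      qed
      have t2: "fh j * (Vr j n - Dv i j) \<ge> 0" if "i \<in> Nb" "j \<in> branch N c m i" for i j
        using fh_nn[OF BN[OF that(2)]] Vd[OF NbN(1)[OF that(1)] BN[OF that(2)]] by simp
      have s1: "(\<Sum>t\<in>{1..N} - U. fh t * Vr t n) \<ge> 0" using t1 by (intro sum_nonneg) auto
      have s2: "(\<Sum>i\<in>Nb. \<Sum>j\<in>branch N c m i. fh j * (Vr j n - Dv i j)) \<ge> 0"
        using t2 by (intro sum_nonneg) auto
      obtain t0 where t0: "t0 \<in> {1..N}" "fh t0 > 0" using fh_nz by blast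
      show ?thesis
      proof (cases "t0 \<in> U")
        case False
        have "0 < fh t0 * Vr t0 n" using t0 Vr_pos[OF t0(1) n] by simp
        also have "\<dots> \<le> (\<Sum>t\<in>{1..N} - U. fh t * Vr t n)"
          by (rule member_le_sum) (use False t0 t1 in auto)
        finally show ?thesis using s2 by simp
      next
        case True
        then obtain i0 where i0: "i0 \<in> Nb" "t0 \<in> branch N c m i0" by (auto simp: U_def)
        have "0 < fh t0 * (Vr t0 n - Dv i0 t0)" using t0 Vd[OF NbN(1)[OF i0(1)] t0(1)] by simp
        also have "\<dots> \<le> (\<Sum>j\<in>branch N c m i0. fh j * (Vr j n - Dv i0 j))"
          by (rule member_le_sum[OF i0(2) _ finB]) (use t2 i0 in auto)
        also have "\<dots> \<le> (\<Sum>i\<in>Nb. \<Sum>j\<in>branch N c m i. fh j * (Vr j n - Dv i j))"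
          by (rule member_le_sum[OF i0(1) _ finNb]) (use t2 in \<open>auto intro: sum_nonneg\<close>)
        finally show ?thesis using s1 by simp
      qed
    qed
    finally show ?thesis .
  qed
  have CR: "Cond \<longleftrightarrow> RHS"
  proof
    assume C: Cond
    show RHS
    proof (cases "gdist N c m n \<le> 1")
      case True thus ?thesis by (simp add: RHS_def)
    next
      case False
      hence d2: "gdist N c m n \<ge> 2" by simp
      obtain i where i: "adj N c m i" "gdist N c i n + 1 = gdist N c m n" using gdist_next[OF m n d2] by blast
      have w: "(Rav m)\<^sup>*\<^sup>* i n" using gdist_walk_avoid[OF m n d2 i] .
      have iNb: "i \<in> Nb" using adj_in[OF i(1)] adj_sym[OF i(1)] by (simp add: Nb_def)
      have "\<forall>j\<in>branch N c i n. fh j = 0" using C iNb branch_sub[OF i(1) w] unfolding Cond_def by blast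
      thus ?thesis using i unfolding RHS_def by blast
    qed
  next
    assume R: RHS
    show Cond unfolding Cond_def
    proof (intro ballI impI)
      fix i j assume i: "i \<in> Nb" and j1: "j \<in> branch N c m i" and j2: "j \<in> branch N c i n"
      have im: "adj N c i m" using NbN[OF i] by simp
      have "\<not> (branch N c m i \<inter> branch N c i n = {})" using j1 j2 by blast
      hence noDisj: "\<not> (n = m \<or> (\<exists>i0. adj N c i0 m \<and> i0 \<noteq> i \<and> (Rav m)\<^sup>*\<^sup>* i0 n))"
        using branch_disj[OF im] by blast
      show "fh j = 0"
      proof (cases "gdist N c m n \<le> 1")
        case True
        from gdist_small[OF m n True] have "adj N c m n" using noDisj by blast
        moreover have "n \<noteq> i"
        proof
          assume "n = i" thus False using j2 by (simp add: branch_iff)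
        qed
        ultimately show ?thesis using noDisj adj_sym by blast
      next
        case False
        hence d2: "gdist N c m n \<ge> 2" by simp
        obtain i' where i': "adj N c m i'" "gdist N c i' n + 1 = gdist N c m n" "\<forall>j\<in>branch N c i' n. fh j = 0"
          using R False unfolding RHS_def by auto
        have w: "(Rav m)\<^sup>*\<^sup>* i' n" using gdist_walk_avoid[OF m n d2 i'(1,2)] .
        show ?thesis
        proof (cases "i' = i")
          case True thus ?thesis using i'(3) j2 by blast
        next
          case False thus ?thesis using noDisj adj_sym[OF i'(1)] w by blast
        qed
      qed
    qed
  qed
  define A where "A = G n + kcoef N c n + 1"
  have A: "A > 0" using antinef_nonneg[OF ag n] kcoef_pos[OF n] by (simp add: A_def G_def)
  have Fpos: "F n > 0" using pos S_nn by linarith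
  have L1: "lam N c G (ecoef N c (modif N c m fh fh)) n = A / (F n - S)"
    by (simp add: lam_def fm A_def)
  have L2: "lam N c G F n = A / F n" by (simp add: lam_def A_def)
  have ge: "A / (F n - S) \<ge> A / F n"
    using A pos S_nn by (intro divide_left_mono) (auto intro: mult_pos_pos)
  have eq: "A / (F n - S) = A / F n \<longleftrightarrow> S = 0"
    using A pos Fpos by (auto simp: frac_eq_eq)
  have "lam N c G (ecoef N c (modif N c m fh fh)) n \<ge> lam N c G F n
        \<and> (lam N c G (ecoef N c (modif N c m fh fh)) n = lam N c G F n \<longleftrightarrow> RHS)"
    using ge eq S0 CR L1 L2 by simp
  thus ?thesis unfolding RHS_def fh_def F_def G_def by simp
qed

end


theorem mainTheorem8:
  fixes N :: nat and c :: config and m n :: nat and f g :: "nat \<Rightarrow> int"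
  assumes "valid_blowups N c"
    and "m \<in> {1..N}" and "n \<in> {1..N}"
    and "antinef N c (\<lambda>i. real_of_int (f i))"
    and "\<exists>i\<in>{1..N}. f i \<noteq> 0"
    and "antinef N c (\<lambda>i. real_of_int (g i))"
  shows "lam N c (\<lambda>i. real_of_int (g i))
            (ecoef N c (modif N c m (hatc N c (\<lambda>i. real_of_int (f i)))
                                     (hatc N c (\<lambda>i. real_of_int (f i))))) n
         \<ge> lam N c (\<lambda>i. real_of_int (g i)) (\<lambda>i. real_of_int (f i)) n
       \<and> (lam N c (\<lambda>i. real_of_int (g i))
            (ecoef N c (modif N c m (hatc N c (\<lambda>i. real_of_int (f i)))
                                     (hatc N c (\<lambda>i. real_of_int (f i))))) n
          = lam N c (\<lambda>i. real_of_int (g i)) (\<lambda>i. real_of_int (f i)) n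
          \<longleftrightarrow> gdist N c m n \<le> 1 \<or>
              (\<exists>i. adj N c m i \<and> gdist N c i n + 1 = gdist N c m n \<and>
                   (\<forall>j\<in>branch N c i n. hatc N c (\<lambda>l. real_of_int (f l)) j = 0)))"
    using main_ctx[OF assms(1) assms(2-6)] .

end
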